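(* Fix a uniformity $r\ge2$, positive integers $\ell>r$ and $s$, and a nonnegative integer $t$. Every $C_{s\ell+rt}^{(r)}$-hom-free $r$-graph is also $C_\ell^{(r)}$-hom-free.
   Context: An $r$-graph is an $r$-uniform hypergraph. For $m>r$, the tight cycle $C_m^{(r)}$ has vertices $v_1,\dots,v_m$ and edges $\{v_i,\dots,v_{i+r-1}\}$, $1\le i\le m$ (indices mod $m$). A homomorphism $F\to G$ is a map $V(F)\to V(G)$ sending each edge of $F$ onto an edge of $G$; $G$ is $F$-hom-free if there is no homomorphism $F\to G$. *)

theory Defs
  imports Main
begin

definition r_graph :: "nat \<Rightarrow> 'a set \<Rightarrow> 'a set set \<Rightarrow> bool" where
  "r_graph r V E \<longleftrightarrow> finite V \<and> (\<forall>e\<in>E. e \<subseteq> V \<and> card e = r)"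

definition tight_cycle_vertices :: "nat \<Rightarrow> nat set" where
  "tight_cycle_vertices m = {..<m}"

definition tight_cycle_edges :: "nat \<Rightarrow> nat \<Rightarrow> nat set set" where
  "tight_cycle_edges r m = {{(i + j) mod m | j. j < r} | i. i < m}"

definition hom :: "'a set \<Rightarrow> 'a set set \<Rightarrow> 'b set \<Rightarrow> 'b set set \<Rightarrow> ('a \<Rightarrow> 'b) \<Rightarrow> bool" where
  "hom VF EF VG EG f \<longleftrightarrow> (\<forall>v\<in>VF. f v \<in> VG) \<and> (\<forall>e\<in>EF. f ` e \<in> EG)"

definition hom_free :: "'a set \<Rightarrow> 'a set set \<Rightarrow> 'b set \<Rightarrow> 'b set set \<Rightarrow> bool" where
  "hom_free VF EF VG EG \<longleftrightarrow> \<not> (\<exists>f. hom VF EF VG EG f)"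

definition tight_cycle_hom_free :: "nat \<Rightarrow> nat \<Rightarrow> 'b set \<Rightarrow> 'b set set \<Rightarrow> bool" where
  "tight_cycle_hom_free r m V E \<longleftrightarrow>
     hom_free (tight_cycle_vertices m) (tight_cycle_edges r m) V E"

end

theory Submission
  imports Defs
begin

lemma img_edge: "f ` {(i + j) mod m | j. j < r} = {f ((i + j) mod m) | j. j < r}"
  by auto

lemma edge_eq_cong:
  assumes "\<And>j. j < r \<Longrightarrow> g ((i + j) mod n) = f ((k + j) mod m)"
  shows "g ` {(i + j) mod n | j. j < r} = f ` {(k + j) mod m | j. j < r}"
proof -
  have "{g ((i + j) mod n) | j. j < r} = {f ((k + j) mod m) | j. j < r}"
  proof (intro Collect_cong iffI)
    fix x assume "\<exists>j. x = g ((i + j) mod n) \<and> j < r"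
    then obtain j where "x = g ((i + j) mod n)" "j < r" by blast
    then show "\<exists>j. x = f ((k + j) mod m) \<and> j < r" using assms by auto
  next
    fix x assume "\<exists>j. x = f ((k + j) mod m) \<and> j < r"
    then obtain j where "x = f ((k + j) mod m)" "j < r" by blast
    then have "x = g ((i + j) mod n)" using assms by simp
    then show "\<exists>j. x = g ((i + j) mod n) \<and> j < r" using \<open>j < r\<close> by blast
  qed
  then show ?thesis by (simp only: img_edge)
qed

lemma mod_window: "(r::nat) > 0 \<Longrightarrow> i < r \<Longrightarrow> {(i + j) mod r | j. j < r} = {..<r}"
proof (intro set_eqI iffI)
  fix x assume "r > 0" "i < r" "x \<in> {..<r}"
  have "(i + ((x + r - i) mod r)) mod r = (i + (x + r - i)) mod r"
    by (rule mod_add_right_eq)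
  also have "i + (x + r - i) = x + r" using \<open>i < r\<close> by linarith
  also have "(x + r) mod r = x" using \<open>x \<in> {..<r}\<close> by simp
  finally have "x = (i + ((x + r - i) mod r)) mod r" by simp
  moreover have "(x + r - i) mod r < r" using \<open>r > 0\<close> by simp
  ultimately show "x \<in> {(i + j) mod r | j. j < r}" by blast
qed auto

lemma hom_mult:
  assumes "hom (tight_cycle_vertices l) (tight_cycle_edges r l) V E f" "s > 0" "l > 0"
  shows "hom (tight_cycle_vertices (s*l)) (tight_cycle_edges r (s*l)) V E (\<lambda>k. f (k mod l))"
proof -
  have l0: "l > 0" using assms(3) .
  show ?thesis unfolding hom_def
  proof (intro conjI ballI)
    fix v assume "v \<in> tight_cycle_vertices (s*l)"
    then show "f (v mod l) \<in> V" using assms(1) l0 by (auto simp: hom_def tight_cycle_vertices_def)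
  next
    fix e assume "e \<in> tight_cycle_edges r (s*l)"
    then obtain i where e: "e = {(i + j) mod (s*l) | j. j < r}" by (auto simp: tight_cycle_edges_def)
    have "(\<lambda>k. f (k mod l)) ` e = f ` {(i mod l + j) mod l | j. j < r}"
      unfolding e
      by (rule edge_eq_cong) (simp add: mod_mod_cancel mod_add_left_eq)
    moreover have "{(i mod l + j) mod l | j. j < r} \<in> tight_cycle_edges r l"
      using l0 unfolding tight_cycle_edges_def by (intro CollectI exI[of _ "i mod l"]) simp
    ultimately show "(\<lambda>k. f (k mod l)) ` e \<in> E" using assms(1) by (auto simp: hom_def)
  qed
qed

lemma hom_add:
  assumes "hom (tight_cycle_vertices m) (tight_cycle_edges r m) V E f" "r < m" "r > 0"
  shows "hom (tight_cycle_vertices (m+r)) (tight_cycle_edges r (m+r)) V E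
           (\<lambda>k. f (if k < r then k else k - r))"
  unfolding hom_def
proof (intro conjI ballI)
  fix v assume "v \<in> tight_cycle_vertices (m+r)"
  then have "(if v < r then v else v - r) \<in> tight_cycle_vertices m"
    using assms(2) unfolding tight_cycle_vertices_def by auto
  then show "f (if v < r then v else v - r) \<in> V" using assms(1)
    unfolding hom_def by blast
next
  fix e assume "e \<in> tight_cycle_edges r (m+r)"
  then obtain i where i: "i < m + r" and e: "e = {(i + j) mod (m+r) | j. j < r}"
    by (auto simp: tight_cycle_edges_def)
  let ?g = "\<lambda>k. f (if k < r then k else k - r)"
  show "?g ` e \<in> E"
  proof (cases "i < r")
    case True
    have "?g ` e = f ` {(i + j) mod r | j. j < r}"
      unfolding e
    proof (rule edge_eq_cong)
      fix j assume "j < r"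
      then have "(i + j) mod (m+r) = i + j" using True assms by simp
      moreover have "(i+j) mod r = (if i + j < r then i + j else i + j - r)"
      proof (cases "i + j < r")
        case True then show ?thesis by simp
      next
        case False
        then have "(i+j) mod r = (i + j - r) mod r" by (intro le_mod_geq) linarith
        also have "\<dots> = i + j - r" using True \<open>j < r\<close> by (intro mod_less) linarith
        finally show ?thesis using False by simp
      qed
      ultimately show "?g ((i + j) mod (m + r)) = f ((i + j) mod r)" by simp
    qed
    also have "\<dots> = f ` {(0 + j) mod m | j. j < r}"
    proof -
      have "{(0 + j) mod m | j. j < r} = {j | j. j < r}"
        using assms(2) by (intro Collect_cong ex_cong1) auto
      also have "\<dots> = {..<r}" by auto
      finally have "{(0 + j) mod m | j. j < r} = {..<r}" .
      then show ?thesis using mod_window[of r i] True assms by simp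
    qed
    also have "\<dots> \<in> E"
    proof -
      have "{(0 + j) mod m | j. j < r} \<in> tight_cycle_edges r m"
        unfolding tight_cycle_edges_def using assms(2) by (intro CollectI exI[of _ 0]) simp
      then show ?thesis using assms(1) unfolding hom_def by blast
    qed
    finally show ?thesis .
  next
    case False
    have "?g ` e = f ` {(i - r + j) mod m | j. j < r}"
      unfolding e
    proof (rule edge_eq_cong)
      fix j assume j: "j < r"
      show "?g ((i + j) mod (m + r)) = f ((i - r + j) mod m)"
      proof (cases "i + j < m + r")
        case True
        have 1: "(i + j) mod (m+r) = i + j" using True by (rule mod_less)
        have 2: "(i - r + j) mod m = i - r + j" using True False by (intro mod_less) linarith
        have 3: "\<not> i + j < r" using False by linarith
        show ?thesis unfolding 1 2 using 3 False by (simp add: algebra_simps)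
      next
        case c: False
        have "(i + j) mod (m+r) = (i + j - (m + r)) mod (m+r)" using c
          by (intro le_mod_geq) linarith
        also have "\<dots> = i + j - (m + r)" using i j by (intro mod_less) linarith
        finally have 1: "(i + j) mod (m+r) = i + j - (m + r)" .
        have "(i - r + j) mod m = (i - r + j - m) mod m" using c False
          by (intro le_mod_geq) linarith
        also have "\<dots> = i - r + j - m" using i j c False assms(2) by (intro mod_less) linarith
        finally have 2: "(i - r + j) mod m = i - r + j - m" .
        have 3: "i + j - (m + r) < r" using i j by linarith
        have 4: "i + j - (m + r) = i - r + j - m" using False by linarith
        show ?thesis unfolding 1 2 using 3 4 by simp
      qed
    qed
    also have "\<dots> \<in> E"
    proof -
      have "i - r < m" using i False by linarith
      then have "{(i - r + j) mod m | j. j < r} \<in> tight_cycle_edges r m"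
        unfolding tight_cycle_edges_def by (intro CollectI exI[of _ "i - r"]) simp
      then show ?thesis using assms(1) unfolding hom_def by blast
    qed
    finally show ?thesis .
  qed
qed

lemma hom_add_many:
  assumes "hom (tight_cycle_vertices m) (tight_cycle_edges r m) V E f" "r < m" "r > 0"
  shows "\<exists>g. hom (tight_cycle_vertices (m + r*t)) (tight_cycle_edges r (m + r*t)) V E g"
proof (induction t)
  case 0 then show ?case using assms by auto
next
  case (Suc t)
  then obtain g where g: "hom (tight_cycle_vertices (m + r*t)) (tight_cycle_edges r (m + r*t)) V E g" by blast
  have "r < m + r*t" using assms(2) by simp
  from hom_add[OF g this assms(3)]
  have "\<exists>g. hom (tight_cycle_vertices (m + r*t + r)) (tight_cycle_edges r (m + r*t + r)) V E g" by blast
  moreover have "m + r*Suc t = m + r*t + r" by simp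
  ultimately show ?case by metis
qed

theorem proposition2p3:
  fixes r l s t :: nat and V :: "'a set" and E :: "'a set set"
  assumes "r \<ge> 2" and "l > r" and "s > 0"
    and "r_graph r V E"
    and "tight_cycle_hom_free r (s * l + r * t) V E"
  shows "tight_cycle_hom_free r l V E"
proof -
  { fix f assume hf: "hom (tight_cycle_vertices l) (tight_cycle_edges r l) V E f"
    have l0: "l > 0" using assms(2) by simp
    have h: "hom (tight_cycle_vertices (s*l)) (tight_cycle_edges r (s*l)) V E (\<lambda>k. f (k mod l))"
      by (rule hom_mult[OF hf assms(3) l0])
    have "l \<le> s * l" using assms(3) by simp
    then have "r < s * l" using assms(2) by linarith
    moreover have "r > 0" using assms(1) by linarith
    ultimately obtain g where "hom (tight_cycle_vertices (s * l + r * t)) (tight_cycle_edges r (s * l + r * t)) V E g"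
      using hom_add_many[OF h] by blast
    then have False
      using assms(5) unfolding tight_cycle_hom_free_def hom_free_def by blast }
  then show ?thesis unfolding tight_cycle_hom_free_def hom_free_def by blast
qed

end
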